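(* Let $G$ be a graph with a valid edge partition, and let $V_1,V_2$ be the associated vertex partition. Suppose that $\sum_{u\in V_i}\deg u$ is odd for $i=1,2$ and that $G$ has an odd number of vertices. Then the number of cycles compatible with the edge partition is odd.
   Context: A spanning 2-forest is a spanning forest with exactly two trees (a tree may be a single vertex). A valid edge partition of a graph is a bipartition of its edge set such that one part is the edge set of a spanning tree and the other part is the edge set of a spanning 2-forest. The associated vertex partition $V_1,V_2$ consists of the vertex sets of the two trees of the 2-forest. A cycle $C$ is compatible with the valid edge partition if all vertices of $C$ lie in the same part of the vertex partition and exactly one edge of $C$ lies in the spanning-tree part. Degrees are taken in $G$. *)

theory Defs
  imports Main
begin

definition simple_graph :: "'a set \<Rightarrow> 'a set set \<Rightarrow> bool" where
  "simple_graph V E \<longleftrightarrow> finite V \<and>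
     (\<forall>e\<in>E. \<exists>x y. x \<noteq> y \<and> e = {x, y} \<and> x \<in> V \<and> y \<in> V)"

definition deg :: "'a set set \<Rightarrow> 'a \<Rightarrow> nat" where
  "deg E u = card {e \<in> E. u \<in> e}"

definition cycle_edges :: "'a list \<Rightarrow> 'a set set" where
  "cycle_edges vs = {{vs ! i, vs ! ((i + 1) mod length vs)} | i. i < length vs}"

definition is_cycle :: "'a set set \<Rightarrow> 'a set set \<Rightarrow> bool" where
  "is_cycle E C \<longleftrightarrow> (\<exists>vs. distinct vs \<and> length vs \<ge> 3 \<and> C = cycle_edges vs) \<and> C \<subseteq> E"

definition acyclic_edges :: "'a set set \<Rightarrow> bool" where
  "acyclic_edges F \<longleftrightarrow> \<not> (\<exists>C. is_cycle F C)"

definition edge_rel :: "'a set set \<Rightarrow> ('a \<times> 'a) set" where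
  "edge_rel F = {(x, y). {x, y} \<in> F}"

definition connected_on :: "'a set \<Rightarrow> 'a set set \<Rightarrow> bool" where
  "connected_on W F \<longleftrightarrow> (\<forall>u\<in>W. \<forall>v\<in>W. (u, v) \<in> (edge_rel F)\<^sup>*)"

definition spanning_tree :: "'a set \<Rightarrow> 'a set set \<Rightarrow> bool" where
  "spanning_tree V T \<longleftrightarrow> (\<forall>e\<in>T. e \<subseteq> V) \<and> connected_on V T \<and> acyclic_edges T"

definition spanning_2forest :: "'a set \<Rightarrow> 'a set set \<Rightarrow> 'a set \<Rightarrow> 'a set \<Rightarrow> bool" where
  "spanning_2forest V F V1 V2 \<longleftrightarrow>
     V1 \<union> V2 = V \<and> V1 \<inter> V2 = {} \<and> V1 \<noteq> {} \<and> V2 \<noteq> {} \<and>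
     (\<forall>e\<in>F. e \<subseteq> V1 \<or> e \<subseteq> V2) \<and>
     connected_on V1 F \<and> connected_on V2 F \<and> acyclic_edges F"

definition valid_edge_partition ::
  "'a set \<Rightarrow> 'a set set \<Rightarrow> 'a set set \<Rightarrow> 'a set set \<Rightarrow> 'a set \<Rightarrow> 'a set \<Rightarrow> bool" where
  "valid_edge_partition V E T F V1 V2 \<longleftrightarrow>
     T \<union> F = E \<and> T \<inter> F = {} \<and> spanning_tree V T \<and> spanning_2forest V F V1 V2"

definition compatible_cycle ::
  "'a set set \<Rightarrow> 'a set set \<Rightarrow> 'a set \<Rightarrow> 'a set \<Rightarrow> 'a set set \<Rightarrow> bool" where
  "compatible_cycle E T V1 V2 C \<longleftrightarrow>
     is_cycle E C \<and> (\<Union>C \<subseteq> V1 \<or> \<Union>C \<subseteq> V2) \<and> card (C \<inter> T) = 1"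

end

theory Submission
  imports Defs "HOL-Library.Transitive_Closure_Table"
begin

lemma edge_rel_conv: "(x,y) \<in> (edge_rel G)\<^sup>* \<longleftrightarrow> (\<lambda>a b. {a,b} \<in> G)\<^sup>*\<^sup>* x y"
  by (simp add: rtranclp_rtrancl_eq edge_rel_def)

lemma modlt[simp]: "3 \<le> (n::nat) \<Longrightarrow> a mod n < n" by simp

lemma path_reach: "rtrancl_path r x xs y \<Longrightarrow> z \<in> set xs \<Longrightarrow> r\<^sup>*\<^sup>* x z"
  by (induction rule: rtrancl_path.induct) (auto intro: converse_rtranclp_into_rtranclp)

lemma cyc_from_path:
  assumes "(x,y) \<in> (edge_rel G)\<^sup>*" "x \<noteq> y" "{x,y} \<notin> G"
  shows "\<exists>C. is_cycle (insert {x,y} G) C \<and> {x,y} \<in> C \<and> \<Union>C \<subseteq> {z. (x,z) \<in> (edge_rel G)\<^sup>*}"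
proof -
  let ?r = "\<lambda>a b. {a,b} \<in> G"
  from assms(1) obtain xs0 where "rtrancl_path ?r x xs0 y"
    using edge_rel_conv rtranclp_eq_rtrancl_path by metis
  then obtain xs where P: "rtrancl_path ?r x xs y" and D: "distinct (x # xs)"
    using rtrancl_path_distinct by metis
  have ne: "xs \<noteq> []" using P assms(2) by (auto elim: rtrancl_path.cases)
  have lastxs: "last xs = y" using rtrancl_path_last[OF P ne] .
  have len: "length xs \<ge> 2"
  proof (rule ccontr)
    assume "\<not> length xs \<ge> 2"
    with ne obtain z where xz: "xs = [z]" by (cases xs; cases "tl xs") auto
    with lastxs have "z = y" by simp
    with rtrancl_path_nth[OF P, of 0] xz assms(3) show False by simp
  qed
  define vs where "vs = x # xs"
  define n where "n = length vs"
  have n3: "n \<ge> 3" using len by (simp add: n_def vs_def)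
  have vslast: "vs ! (n - 1) = y" using lastxs ne
    by (simp add: n_def vs_def last_conv_nth)
  have edges: "{vs ! i, vs ! ((i + 1) mod n)} \<in> insert {x,y} G" if "i < n" for i
  proof (cases "i + 1 < n")
    case True
    then have "(i+1) mod n = i + 1" by simp
    moreover have "vs ! (i+1) = xs ! i" by (simp add: vs_def)
    moreover have "?r (vs ! i) (xs ! i)" using rtrancl_path_nth[OF P, of i] True
      by (simp add: vs_def n_def)
    ultimately show ?thesis by simp
  next
    case False
    with that have "i = n - 1" by simp
    moreover have "(n - 1 + 1) mod n = 0" using n3 by simp
    ultimately show ?thesis using vslast by (simp add: vs_def insert_commute)
  qed
  have Ceq: "cycle_edges vs \<subseteq> insert {x,y} G"
    using edges by (auto simp: cycle_edges_def n_def)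
  have "{x,y} \<in> cycle_edges vs"
  proof -
    have "(n - 1 + 1) mod n = 0" using n3 by simp
    then have "{vs ! (n-1), vs ! ((n - 1 + 1) mod n)} = {x,y}"
      using vslast by (simp add: vs_def insert_commute)
    moreover have "n - 1 < length vs" using n3 by (simp add: n_def)
    ultimately show ?thesis unfolding cycle_edges_def n_def by blast
  qed
  moreover have "\<Union>(cycle_edges vs) \<subseteq> set vs"
    using n3 by (auto simp: cycle_edges_def n_def intro!: nth_mem)
  moreover have "set vs \<subseteq> {z. (x,z) \<in> (edge_rel G)\<^sup>*}"
    using path_reach[OF P] by (auto simp: vs_def edge_rel_conv)
  moreover have "is_cycle (insert {x,y} G) (cycle_edges vs)"
  proof -
    have "distinct vs" "length vs \<ge> 3" using D n3 by (simp_all add: vs_def n_def)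
    then show ?thesis unfolding is_cycle_def using Ceq by (intro conjI exI[of _ vs]) simp_all
  qed
  ultimately show ?thesis by blast
qed

lemma sym_edge_rel: "sym ((edge_rel G)\<^sup>*)"
  by (rule sym_rtrancl) (auto simp: sym_def edge_rel_def insert_commute)

lemma edge_rel_sym: "(x,y) \<in> (edge_rel G)\<^sup>* \<Longrightarrow> (y,x) \<in> (edge_rel G)\<^sup>*"
  using sym_edge_rel by (metis symD)

lemma mod_arith1:
  assumes "(i::nat) < n" "n \<ge> 3" "((i + 1) mod n + 1) mod n = i"
  shows False
proof (cases "i + 1 < n")
  case True
  then have "(i+1) mod n = i + 1" by simp
  with assms(3) have "(i+2) mod n = i" by simp
  then show False using assms(1,2) True
    by (cases "i + 2 < n") (auto simp: mod_if split: if_splits)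
next
  case False
  then have "i + 1 = n" using assms by simp
  then show False using assms by (auto simp: mod_if split: if_splits)
qed

lemma cyc_edge_inj:
  assumes "distinct vs" "length vs \<ge> 3" "i < length vs" "j < length vs"
    "{vs ! j, vs ! ((j+1) mod length vs)} = {vs ! i, vs ! ((i+1) mod length vs)}"
  shows "j = i"
proof (rule ccontr)
  assume ji: "j \<noteq> i"
  let ?n = "length vs"
  have m1: "(j+1) mod ?n < ?n" "(i+1) mod ?n < ?n" using assms by auto
  have "vs ! j \<noteq> vs ! i" using ji assms nth_eq_iff_index_eq by metis
  with assms(5) have "vs ! j = vs ! ((i+1) mod ?n) \<and> vs ! ((j+1) mod ?n) = vs ! i"
    by (auto simp: doubleton_eq_iff)
  then have "j = (i+1) mod ?n" "(j+1) mod ?n = i"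
    using assms m1 nth_eq_iff_index_eq by metis+
  then show False using mod_arith1[OF assms(3) assms(2)] by simp
qed

lemma cyc_conn:
  assumes D: "distinct vs" and L: "length vs \<ge> 3" and g: "g \<in> cycle_edges vs" and gxy: "g = {x,y}"
  shows "(x,y) \<in> (edge_rel (cycle_edges vs - {g}))\<^sup>*"
proof -
  let ?n = "length vs"
  let ?R = "edge_rel (cycle_edges vs - {g})"
  from g obtain i where i: "i < ?n" and gi: "g = {vs ! i, vs ! ((i+1) mod ?n)}"
    by (auto simp: cycle_edges_def)
  have step: "(vs ! ((i+1) mod ?n), vs ! ((i+1+k) mod ?n)) \<in> ?R\<^sup>*" if "k < ?n" for k
    using that
  proof (induction k)
    case 0
    then show ?case by simp
  next
    case (Suc k)
    define j where "j = (i+1+k) mod ?n"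
    have jn: "j < ?n" using L by (simp add: j_def)
    have "j \<noteq> i"
    proof
      assume "j = i"
      show False
      proof (cases "i + 1 + k < ?n")
        case True
        then show False using \<open>j = i\<close> by (simp add: j_def)
      next
        case False
        then have "(i+1+k) mod ?n = i + 1 + k - ?n" using i Suc.prems
          by (simp add: mod_if le_mod_geq)
        then show False using \<open>j = i\<close> Suc.prems by (simp add: j_def)
      qed
    qed
    then have ne: "{vs ! j, vs ! ((j+1) mod ?n)} \<noteq> g"
      using cyc_edge_inj[OF D L i jn] gi by auto
    have inC: "{vs ! j, vs ! ((j+1) mod ?n)} \<in> cycle_edges vs"
      using jn by (auto simp: cycle_edges_def)
    have jj: "(j+1) mod ?n = (i+1+Suc k) mod ?n" by (simp add: j_def mod_Suc_eq)
    have "(vs ! j, vs ! ((i+1+Suc k) mod ?n)) \<in> ?R"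
      using ne inC jj by (simp add: edge_rel_def)
    with Suc show ?case by (simp add: j_def)
  qed
  have e1: "i+1+(?n - 1) = i + ?n" using L by simp
  have e2: "(i + ?n) mod ?n = i" using i by simp
  have E: "(i+1+(?n - 1)) mod ?n = i" by (subst e1) (rule e2)
  have lt: "?n - 1 < ?n" using L by simp
  have "(vs ! ((i+1) mod ?n), vs ! ((i+1+(?n - 1)) mod ?n)) \<in> ?R\<^sup>*" by (rule step[OF lt])
  then have "(vs ! ((i+1) mod ?n), vs ! i) \<in> ?R\<^sup>*" unfolding E .
  then have a: "(vs ! i, vs ! ((i+1) mod ?n)) \<in> ?R\<^sup>*" by (rule edge_rel_sym)
  from gi gxy have "(x = vs ! i \<and> y = vs ! ((i+1) mod ?n)) \<or> (y = vs ! i \<and> x = vs ! ((i+1) mod ?n))"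
    by (auto simp: doubleton_eq_iff)
  then show ?thesis using a edge_rel_sym[OF a] by (elim disjE) simp_all
qed


lemma edge_rel_mono: "A \<subseteq> B \<Longrightarrow> edge_rel A \<subseteq> edge_rel B"
  by (auto simp: edge_rel_def)

definition K :: "'a set set \<Rightarrow> 'a set \<Rightarrow> 'a set set" where
  "K F e = {f \<in> F. \<forall>a b. e = {a,b} \<longrightarrow> (a,b) \<notin> (edge_rel (F - {f}))\<^sup>*}"

lemma cycle_char:
  assumes acyc: "acyclic_edges F"
    and twoF: "\<forall>f\<in>F. \<exists>x y. x \<noteq> y \<and> f = {x,y}"
    and D: "distinct vs" and L: "length vs \<ge> 3" and C: "C = cycle_edges vs"
    and eC: "e \<in> C" and eF: "e \<notin> F" and CF: "C - {e} \<subseteq> F"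
  shows "C = insert e (K F e)"
proof
  show "C \<subseteq> insert e (K F e)"
  proof
    fix x assume xC: "x \<in> C"
    show "x \<in> insert e (K F e)"
    proof (cases "x = e")
      case True then show ?thesis by simp
    next
      case False
      with xC CF have xF: "x \<in> F" by blast
      then obtain p q where pq: "p \<noteq> q" "x = {p,q}" using twoF by blast
      have "(a,b) \<notin> (edge_rel (F - {x}))\<^sup>*" if eab: "e = {a,b}" for a b
      proof
        let ?R = "edge_rel (F - {x})"
        assume ab: "(a,b) \<in> ?R\<^sup>*"
        have ba: "(b,a) \<in> ?R\<^sup>*" using edge_rel_sym[OF ab] .
        have "(p,q) \<in> (edge_rel (C - {x}))\<^sup>*"
          using cyc_conn[OF D L xC[unfolded C] pq(2)] C by simp
        moreover have "edge_rel (C - {x}) \<subseteq> ?R\<^sup>*"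
        proof
          fix z assume "z \<in> edge_rel (C - {x})"
          then obtain u w where z: "z = (u,w)" and uw: "{u,w} \<in> C - {x}"
            by (cases z) (simp add: edge_rel_def)
          show "z \<in> ?R\<^sup>*"
          proof (cases "{u,w} = e")
            case True
            then have "(u = a \<and> w = b) \<or> (u = b \<and> w = a)" using eab by (auto simp: doubleton_eq_iff)
            then show ?thesis using ab ba z by auto
          next
            case False
            then have "{u,w} \<in> C - {e}" using uw by simp
            then have "{u,w} \<in> F - {x}" using uw CF by auto
            then have "z \<in> ?R" using z by (simp add: edge_rel_def)
            then show ?thesis by (rule r_into_rtrancl)
          qed
        qed
        ultimately have pqR: "(p,q) \<in> ?R\<^sup>*"
          using rtrancl_subset_rtrancl by blast
        have "{p,q} \<notin> F - {x}" using pq by simp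
        from cyc_from_path[OF pqR pq(1) this] obtain C' where
          "is_cycle (insert {p,q} (F - {x})) C'" by blast
        moreover have "insert {p,q} (F - {x}) = F" using pq xF by blast
        ultimately show False using acyc by (simp add: acyclic_edges_def)
      qed
      then show ?thesis using xF by (simp add: K_def)
    qed
  qed
next
  show "insert e (K F e) \<subseteq> C"
  proof
    fix f assume f: "f \<in> insert e (K F e)"
    show "f \<in> C"
    proof (rule ccontr)
      assume fC: "f \<notin> C"
      with f eC have fK: "f \<in> K F e" by auto
      from eC C obtain a b where eab: "e = {a,b}" by (auto simp: cycle_edges_def)
      have "(a,b) \<in> (edge_rel (C - {e}))\<^sup>*"
        using cyc_conn[OF D L eC[unfolded C] eab] C by simp
      moreover have "C - {e} \<subseteq> F - {f}" using CF fC by blast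
      ultimately have "(a,b) \<in> (edge_rel (F - {f}))\<^sup>*"
        using rtrancl_mono[OF edge_rel_mono] by blast
      with fK eab show False by (auto simp: K_def)
    qed
  qed
qed


definition cls :: "'a set set \<Rightarrow> 'a \<Rightarrow> 'a set" where
  "cls G v = {w. (v,w) \<in> (edge_rel G)\<^sup>*}"

lemma cls_eq: "(u,v) \<in> (edge_rel G)\<^sup>* \<Longrightarrow> cls G u = cls G v"
  unfolding cls_def using edge_rel_sym rtrancl_trans by metis

lemma rel_insert:
  assumes "(v,w) \<in> (edge_rel (insert {x,y} G))\<^sup>*"
  shows "(v,w) \<in> (edge_rel G)\<^sup>* \<or> ((v,x) \<in> (edge_rel G)\<^sup>* \<and> (y,w) \<in> (edge_rel G)\<^sup>*)
     \<or> ((v,y) \<in> (edge_rel G)\<^sup>* \<and> (x,w) \<in> (edge_rel G)\<^sup>*)"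
  using assms
proof (induction rule: rtrancl_induct)
  case base
  then show ?case by simp
next
  case (step w z)
  let ?R = "edge_rel G"
  from step.hyps(2) have "{w,z} = {x,y} \<or> (w,z) \<in> ?R" by (auto simp: edge_rel_def)
  then show ?case
  proof
    assume "{w,z} = {x,y}"
    then have "(w = x \<and> z = y) \<or> (w = y \<and> z = x)" by (auto simp: doubleton_eq_iff)
    then show ?thesis using step.IH by auto
  next
    assume wz: "(w,z) \<in> ?R"
    show ?thesis using step.IH rtrancl_into_rtrancl[OF _ wz] by blast
  qed
qed

lemma rel_insert2:
  assumes "(v,w) \<in> (edge_rel G)\<^sup>* \<or> ((v,x) \<in> (edge_rel G)\<^sup>* \<and> (y,w) \<in> (edge_rel G)\<^sup>*)
     \<or> ((v,y) \<in> (edge_rel G)\<^sup>* \<and> (x,w) \<in> (edge_rel G)\<^sup>*)"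
  shows "(v,w) \<in> (edge_rel (insert {x,y} G))\<^sup>*"
proof -
  let ?S = "edge_rel (insert {x,y} G)"
  have sub: "(edge_rel G)\<^sup>* \<subseteq> ?S\<^sup>*" by (rule rtrancl_mono[OF edge_rel_mono]) auto
  have xy: "(x,y) \<in> ?S\<^sup>*" "(y,x) \<in> ?S\<^sup>*" by (auto simp: edge_rel_def insert_commute)
  from assms show ?thesis
  proof (elim disjE conjE)
    assume "(v,w) \<in> (edge_rel G)\<^sup>*" then show ?thesis using sub by blast
  next
    assume a: "(v,x) \<in> (edge_rel G)\<^sup>*" "(y,w) \<in> (edge_rel G)\<^sup>*"
    then have "(v,x) \<in> ?S\<^sup>*" "(y,w) \<in> ?S\<^sup>*" using sub by blast+
    then show ?thesis using xy rtrancl_trans by metis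
  next
    assume a: "(v,y) \<in> (edge_rel G)\<^sup>*" "(x,w) \<in> (edge_rel G)\<^sup>*"
    then have "(v,y) \<in> ?S\<^sup>*" "(x,w) \<in> ?S\<^sup>*" using sub by blast+
    then show ?thesis using xy rtrancl_trans by metis
  qed
qed

lemma cls_insert_in:
  assumes "(v,x) \<in> (edge_rel G)\<^sup>* \<or> (v,y) \<in> (edge_rel G)\<^sup>*"
    and nc: "(x,y) \<notin> (edge_rel G)\<^sup>*"
  shows "cls (insert {x,y} G) v = cls G x \<union> cls G y"
proof -
  let ?c = "\<lambda>a b. (a,b) \<in> (edge_rel G)\<^sup>*"
  have tr: "\<And>a b c. ?c a b \<Longrightarrow> ?c b c \<Longrightarrow> ?c a c" using rtrancl_trans by metis
  have sy: "\<And>a b. ?c a b \<Longrightarrow> ?c b a" using edge_rel_sym by metis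
  have rf: "\<And>a. ?c a a" by simp
  have "(v,w) \<in> (edge_rel (insert {x,y} G))\<^sup>* \<longleftrightarrow> ?c x w \<or> ?c y w" for w
  proof
    assume "(v,w) \<in> (edge_rel (insert {x,y} G))\<^sup>*"
    from rel_insert[OF this] show "?c x w \<or> ?c y w"
    proof (elim disjE conjE)
      assume h: "?c v w"
      from assms(1) show ?thesis
      proof
        assume "?c v x" then show ?thesis using tr[OF sy[OF \<open>?c v x\<close>] h] by simp
      next
        assume "?c v y" then show ?thesis using tr[OF sy[OF \<open>?c v y\<close>] h] by simp
      qed
    next
      assume "?c v x" "?c y w" then show ?thesis by simp
    next
      assume "?c v y" "?c x w" then show ?thesis by simp
    qed
  next
    assume "?c x w \<or> ?c y w"
    then have "?c v w \<or> (?c v x \<and> ?c y w) \<or> (?c v y \<and> ?c x w)"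
    proof (elim disjE)
      assume xw: "?c x w"
      from assms(1) show ?thesis
      proof
        assume "?c v x" then show ?thesis using tr[OF _ xw] by simp
      next
        assume "?c v y" then show ?thesis using xw by simp
      qed
    next
      assume yw: "?c y w"
      from assms(1) show ?thesis
      proof
        assume "?c v x" then show ?thesis using yw by simp
      next
        assume "?c v y" then show ?thesis using tr[OF _ yw] by simp
      qed
    qed
    then show "(v,w) \<in> (edge_rel (insert {x,y} G))\<^sup>*"
      by (rule rel_insert2)
  qed
  then show ?thesis by (auto simp: cls_def)
qed

lemma cls_insert_out:
  assumes "(v,x) \<notin> (edge_rel G)\<^sup>*" "(v,y) \<notin> (edge_rel G)\<^sup>*"
  shows "cls (insert {x,y} G) v = cls G v"
proof -
  have "(v,w) \<in> (edge_rel (insert {x,y} G))\<^sup>* \<longleftrightarrow> (v,w) \<in> (edge_rel G)\<^sup>*" for w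
  proof
    assume "(v,w) \<in> (edge_rel (insert {x,y} G))\<^sup>*"
    from rel_insert[OF this] show "(v,w) \<in> (edge_rel G)\<^sup>*" using assms by simp
  next
    assume "(v,w) \<in> (edge_rel G)\<^sup>*"
    then show "(v,w) \<in> (edge_rel (insert {x,y} G))\<^sup>*" using rel_insert2[of v w G x y] by simp
  qed
  then show ?thesis by (auto simp: cls_def)
qed


lemma is_cycle_mono:
  assumes "is_cycle G C" "G \<subseteq> H" shows "is_cycle H C"
proof -
  have "C \<subseteq> G" using assms(1) by (simp add: is_cycle_def)
  then have "C \<subseteq> H" using assms(2) by (rule subset_trans)
  then show ?thesis using assms(1) by (simp add: is_cycle_def)
qed

lemma acyclic_insert:
  assumes "acyclic_edges (insert f G)" shows "acyclic_edges G"
  unfolding acyclic_edges_def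
proof
  assume "\<exists>C. is_cycle G C"
  then obtain C where "is_cycle G C" by (elim exE)
  then have "is_cycle (insert f G) C" by (rule is_cycle_mono) (rule subset_insertI)
  then show False using assms by (simp add: acyclic_edges_def)
qed

lemma comps_count:
  assumes fV: "finite V"
  shows "finite G \<Longrightarrow> (\<forall>e\<in>G. \<exists>x y. x \<noteq> y \<and> e = {x,y} \<and> x \<in> V \<and> y \<in> V)
    \<Longrightarrow> acyclic_edges G \<Longrightarrow> card V = card G + card (cls G ` V)"
proof (induction G rule: finite_induct)
  case empty
  have cl: "cls {} = (\<lambda>v. {v})" by (rule ext) (simp add: cls_def edge_rel_def)
  have "cls {} ` V = (\<lambda>v. {v}) ` V" unfolding cl by (rule refl)
  moreover have "card ((\<lambda>v. {v}) ` V) = card V" by (rule card_image) (simp add: inj_on_def)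
  ultimately show ?case by simp
next
  case (insert f G)
  from insert.prems(1) obtain x y where xy: "x \<noteq> y" "f = {x,y}" "x \<in> V" "y \<in> V" by blast
  have acG: "acyclic_edges G" using acyclic_insert insert.prems(2) by blast
  have IH: "card V = card G + card (cls G ` V)" using insert.IH insert.prems acG by blast
  let ?c = "\<lambda>a b. (a,b) \<in> (edge_rel G)\<^sup>*"
  have nc: "\<not> ?c x y"
  proof
    assume "?c x y"
    from cyc_from_path[OF this xy(1)] insert.hyps(2) xy(2) obtain C where
      "is_cycle (insert f G) C" by auto
    then show False using insert.prems(2) by (simp add: acyclic_edges_def)
  qed
  let ?cx = "cls G x" and ?cy = "cls G y"
  let ?B = "cls G ` V"
  have xcx: "x \<in> ?cx" "y \<in> ?cy" by (simp_all add: cls_def)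
  have ycx: "y \<notin> ?cx" using nc by (simp add: cls_def)
  have ne: "?cx \<noteq> ?cy" using xcx ycx by blast
  have inB: "?cx \<in> ?B" "?cy \<in> ?B" using xy by auto
  have notin: "?cx \<union> ?cy \<notin> ?B - {?cx, ?cy}"
  proof
    assume "?cx \<union> ?cy \<in> ?B - {?cx, ?cy}"
    then obtain v where v: "v \<in> V" "cls G v = ?cx \<union> ?cy" by auto
    then have "x \<in> cls G v" using xcx by blast
    then have "?c v x" by (simp add: cls_def)
    then have "cls G v = ?cx" by (rule cls_eq)
    then show False using v xcx ycx by blast
  qed
  have newB: "cls (insert f G) ` V = insert (?cx \<union> ?cy) (?B - {?cx, ?cy})"
  proof
    show "cls (insert f G) ` V \<subseteq> insert (?cx \<union> ?cy) (?B - {?cx, ?cy})"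
    proof
      fix A assume "A \<in> cls (insert f G) ` V"
      then obtain v where v: "v \<in> V" "A = cls (insert f G) v" by blast
      show "A \<in> insert (?cx \<union> ?cy) (?B - {?cx, ?cy})"
      proof (cases "?c v x \<or> ?c v y")
        case True
        then show ?thesis using cls_insert_in[OF True nc] v xy(2) by simp
      next
        case False
        then have A: "A = cls G v" using cls_insert_out[of v x G y] v xy(2) by simp
        have "cls G v \<noteq> ?cx" using False xcx by (auto simp: cls_def)
        moreover have "cls G v \<noteq> ?cy" using False xcx by (auto simp: cls_def)
        ultimately show ?thesis using A v by blast
      qed
    qed
  next
    show "insert (?cx \<union> ?cy) (?B - {?cx, ?cy}) \<subseteq> cls (insert f G) ` V"
    proof
      fix A assume A: "A \<in> insert (?cx \<union> ?cy) (?B - {?cx, ?cy})"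
      show "A \<in> cls (insert f G) ` V"
      proof (cases "A = ?cx \<union> ?cy")
        case True
        have "cls (insert f G) x = ?cx \<union> ?cy" using cls_insert_in[of x x G y] nc xy(2) by simp
        then have "A = cls (insert f G) x" using True by simp
        then show ?thesis using xy(3) by (rule image_eqI)
      next
        case False
        with A obtain v where v: "v \<in> V" "A = cls G v" "cls G v \<noteq> ?cx" "cls G v \<noteq> ?cy" by auto
        have "\<not> ?c v x"
        proof
          assume "?c v x" then have "cls G v = ?cx" by (rule cls_eq)
          with v(3) show False by simp
        qed
        moreover have "\<not> ?c v y"
        proof
          assume "?c v y" then have "cls G v = ?cy" by (rule cls_eq)
          with v(4) show False by simp
        qed
        ultimately have "cls (insert f G) v = cls G v" using cls_insert_out[of v x G y] xy(2) by simp
        then have "A = cls (insert f G) v" using v(2) by simp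
        then show ?thesis using v(1) by (rule image_eqI)
      qed
    qed
  qed
  have fB: "finite ?B" using fV by simp
  have "card (?B - {?cx, ?cy}) = card ?B - 2" using inB ne fB
    by (simp add: card_Diff_subset)
  moreover have "card ?B \<ge> 2"
  proof -
    have "{?cx, ?cy} \<subseteq> ?B" using inB by simp
    then have "card {?cx, ?cy} \<le> card ?B" using fB by (rule card_mono[rotated])
    then show ?thesis using ne by simp
  qed
  moreover have "card (cls (insert f G) ` V) = card (?B - {?cx, ?cy}) + 1"
    using newB notin fB by simp
  ultimately show ?case using IH insert.hyps by simp
qed


lemma reach_stay:
  assumes "(a,z) \<in> (edge_rel G)\<^sup>*" "a \<in> W" "\<forall>e\<in>G. e \<subseteq> W \<or> e \<inter> W = {}"
  shows "z \<in> W"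
  using assms(1,2)
proof (induction rule: rtrancl_induct)
  case base then show ?case by simp
next
  case (step w z)
  then have wz: "{w,z} \<in> G" and wW: "w \<in> W" by (simp_all add: edge_rel_def)
  from wz have "{w,z} \<subseteq> W \<or> {w,z} \<inter> W = {}" by (rule bspec[OF assms(3)])
  then show ?case using \<open>w \<in> W\<close> by auto
qed

lemma exist_cyc:
  assumes eT: "e \<in> T" and eW: "e \<subseteq> W" and TE: "T \<subseteq> E" and FE: "F \<subseteq> E" and TF: "T \<inter> F = {}"
    and conn: "connected_on W F" and FW: "\<forall>f\<in>F. f \<subseteq> W \<or> f \<inter> W = {}"
    and eab: "e = {a,b}" and ab: "a \<noteq> b"
  shows "\<exists>C. is_cycle E C \<and> \<Union>C \<subseteq> W \<and> C \<inter> T = {e}"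
proof -
  have aW: "a \<in> W" "b \<in> W" using eW eab by auto
  then have r: "(a,b) \<in> (edge_rel F)\<^sup>*" using conn by (simp add: connected_on_def)
  have nF: "{a,b} \<notin> F"
  proof
    assume "{a,b} \<in> F" then have "e \<in> T \<inter> F" using eT eab by simp
    then show False using TF by simp
  qed
  from cyc_from_path[OF r ab nF] obtain C where
    C: "is_cycle (insert {a,b} F) C" "{a,b} \<in> C" "\<Union>C \<subseteq> {z. (a,z) \<in> (edge_rel F)\<^sup>*}" by blast
  have "e \<in> E" using eT TE by (rule subsetD[rotated])
  then have "insert {a,b} F \<subseteq> E" using FE eab by simp
  then have cE: "is_cycle E C" using C(1) by (rule is_cycle_mono[rotated])
  have "\<Union>C \<subseteq> W"
  proof
    fix z assume "z \<in> \<Union>C"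
    with C(3) have "z \<in> {z. (a,z) \<in> (edge_rel F)\<^sup>*}" by (rule subsetD)
    then have "(a,z) \<in> (edge_rel F)\<^sup>*" by simp
    then show "z \<in> W" by (rule reach_stay[OF _ aW(1) FW])
  qed
  moreover have "C \<inter> T = {e}"
  proof -
    have "C \<subseteq> insert {a,b} F" using C(1) by (simp add: is_cycle_def)
    show ?thesis
    proof
      show "C \<inter> T \<subseteq> {e}"
      proof
        fix c assume c: "c \<in> C \<inter> T"
        show "c \<in> {e}"
        proof (rule ccontr)
          assume "c \<notin> {e}"
          then have "c \<in> F" using c \<open>C \<subseteq> insert {a,b} F\<close> eab by auto
          then show False using c TF by auto
        qed
      qed
      show "{e} \<subseteq> C \<inter> T" using C(2) eT eab by simp
    qed
  qed
  ultimately show ?thesis using cE by (intro exI[of _ C]) simp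
qed

lemma edge_card:
  assumes "x \<noteq> y" "x \<in> V1 \<union> V2" "y \<in> V1 \<union> V2" "V1 \<inter> V2 = {}"
  shows "card ({x,y} \<inter> V1) = (if \<not> ({x,y} \<subseteq> V1 \<or> {x,y} \<subseteq> V2) then 1 else 0) + 2 * (if {x,y} \<subseteq> V1 then 1 else 0)"
proof (cases "x \<in> V1")
  case True
  then have "x \<notin> V2" using assms by blast
  show ?thesis
  proof (cases "y \<in> V1")
    case True
    then show ?thesis using \<open>x \<in> V1\<close> assms by (simp add: Int_absorb2)
  next
    case False
    then have "y \<in> V2" using assms by blast
    have "{x,y} \<inter> V1 = {x}" using \<open>x \<in> V1\<close> False by auto
    then show ?thesis using False \<open>x \<notin> V2\<close> \<open>x \<in> V1\<close> by simp
  qed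
next
  case False
  then have "x \<in> V2" using assms by blast
  show ?thesis
  proof (cases "y \<in> V1")
    case True
    then have "y \<notin> V2" using assms by blast
    have "{x,y} \<inter> V1 = {y}" using \<open>y \<in> V1\<close> False by auto
    then show ?thesis using False True \<open>y \<notin> V2\<close> by simp
  next
    case False
    then have "y \<in> V2" using assms by blast
    have "{x,y} \<inter> V1 = {}" using \<open>x \<notin> V1\<close> False by auto
    then show ?thesis using False \<open>x \<notin> V1\<close> \<open>x \<in> V2\<close> \<open>y \<in> V2\<close> by simp
  qed
qed

lemma deg_sum:
  assumes "finite E" "finite W"
  shows "(\<Sum>u\<in>W. deg E u) = (\<Sum>e\<in>E. card (e \<inter> W))"
proof -
  have "(\<Sum>u\<in>W. deg E u) = (\<Sum>u\<in>W. \<Sum>e\<in>E. if u \<in> e then 1 else 0)"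
  proof (rule sum.cong[OF refl])
    fix u
    have "deg E u = (\<Sum>e\<in>{e\<in>E. u \<in> e}. 1)" by (simp add: deg_def)
    also have "\<dots> = (\<Sum>e\<in>E. if u \<in> e then 1 else 0)" using assms(1) by (rule sum.inter_filter)
    finally show "deg E u = (\<Sum>e\<in>E. if u \<in> e then 1 else 0)" .
  qed
  also have "\<dots> = (\<Sum>e\<in>E. \<Sum>u\<in>W. if u \<in> e then 1 else 0)" by (rule sum.swap)
  also have "\<dots> = (\<Sum>e\<in>E. card (e \<inter> W))"
  proof (rule sum.cong[OF refl])
    fix e
    have "(\<Sum>u\<in>W. if u \<in> e then 1 else 0) = (\<Sum>u\<in>{u\<in>W. u \<in> e}. 1::nat)"
      using assms(2) by (rule sum.inter_filter[symmetric])
    also have "\<dots> = card (e \<inter> W)" by (simp add: Int_def conj_commute)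
    finally show "(\<Sum>u\<in>W. if u \<in> e then 1 else 0) = card (e \<inter> W)" .
  qed
  finally show ?thesis .
qed


theorem lemma5p3:
  fixes V :: "'a set" and E T F :: "'a set set" and V1 V2 :: "'a set"
  assumes "simple_graph V E"
    and "valid_edge_partition V E T F V1 V2"
    and "odd (\<Sum>u\<in>V1. deg E u)"
    and "odd (\<Sum>u\<in>V2. deg E u)"
    and "odd (card V)"
  shows "odd (card {C. compatible_cycle E T V1 V2 C})"
proof -
  from assms(1) have fV: "finite V" and sE: "\<forall>e\<in>E. \<exists>x y. x \<noteq> y \<and> e = {x,y} \<and> x \<in> V \<and> y \<in> V"
    by (simp_all add: simple_graph_def)
  from assms(2) have TFE: "T \<union> F = E" and TF: "T \<inter> F = {}" and ST: "spanning_tree V T"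
    and SF: "spanning_2forest V F V1 V2"
    unfolding valid_edge_partition_def by simp_all
  from ST have TV: "\<forall>e\<in>T. e \<subseteq> V" and connT: "connected_on V T" and acT: "acyclic_edges T"
    unfolding spanning_tree_def by simp_all
  from SF have V12: "V1 \<union> V2 = V" and V1V2: "V1 \<inter> V2 = {}" and V1ne: "V1 \<noteq> {}"
    and Fin: "\<forall>e\<in>F. e \<subseteq> V1 \<or> e \<subseteq> V2" and c1: "connected_on V1 F" and c2: "connected_on V2 F"
    and acF: "acyclic_edges F"
    unfolding spanning_2forest_def by simp_all
  have TE: "T \<subseteq> E" and FE: "F \<subseteq> E" using TFE by auto
  have "E \<subseteq> Pow V"
  proof
    fix e assume "e \<in> E"
    with sE obtain x y where "e = {x,y}" "x \<in> V" "y \<in> V" by blast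
    then show "e \<in> Pow V" by simp
  qed
  then have finE: "finite E" using fV by (simp add: finite_subset)
  have finT: "finite T" using finE TE by (rule finite_subset[rotated])
  have sT: "\<forall>e\<in>T. \<exists>x y. x \<noteq> y \<and> e = {x,y} \<and> x \<in> V \<and> y \<in> V"
  proof
    fix e assume "e \<in> T" then have "e \<in> E" using TE by auto
    then show "\<exists>x y. x \<noteq> y \<and> e = {x,y} \<and> x \<in> V \<and> y \<in> V" by (rule bspec[OF sE])
  qed
  have sF: "\<forall>f\<in>F. \<exists>x y. x \<noteq> y \<and> f = {x,y}"
  proof
    fix e assume "e \<in> F" then have "e \<in> E" using FE by auto
    then have "\<exists>x y. x \<noteq> y \<and> e = {x,y} \<and> x \<in> V \<and> y \<in> V" by (rule bspec[OF sE])
    then show "\<exists>x y. x \<noteq> y \<and> e = {x,y}" by auto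
  qed
  have clsV: "cls T v = V" if "v \<in> V" for v
  proof
    show "cls T v \<subseteq> V"
    proof
      fix w assume "w \<in> cls T v"
      then have r: "(v,w) \<in> (edge_rel T)\<^sup>*" by (simp add: cls_def)
      have tv: "\<forall>e\<in>T. e \<subseteq> V \<or> e \<inter> V = {}" using TV by simp
      show "w \<in> V" by (rule reach_stay[OF r that tv])
    qed
    show "V \<subseteq> cls T v" using connT that by (auto simp: connected_on_def cls_def)
  qed
  have Vne: "V \<noteq> {}" using V1ne V12 by auto
  have "cls T ` V = {V}" using clsV Vne by auto
  then have cardT: "card V = card T + 1" using comps_count[OF fV finT sT acT] by simp
  define S where "S = {e\<in>T. e \<subseteq> V1 \<or> e \<subseteq> V2}"
  define X where "X = {e\<in>T. \<not> (e \<subseteq> V1 \<or> e \<subseteq> V2)}"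
  have TSX: "card T = card S + card X"
  proof -
    have "T = S \<union> X" "S \<inter> X = {}" by (auto simp: S_def X_def)
    moreover have "finite S" "finite X" using finT by (simp_all add: S_def X_def)
    ultimately show ?thesis by (simp add: card_Un_disjoint)
  qed
  have XE: "X = {e\<in>E. \<not> (e \<subseteq> V1 \<or> e \<subseteq> V2)}"
    using TFE Fin by (auto simp: X_def)
  have "(\<Sum>u\<in>V1. deg E u) = (\<Sum>e\<in>E. card (e \<inter> V1))"
    using finE fV V12 by (intro deg_sum) auto
  also have "\<dots> = (\<Sum>e\<in>E. (if \<not> (e \<subseteq> V1 \<or> e \<subseteq> V2) then 1 else 0) + 2 * (if e \<subseteq> V1 then 1 else 0))"
  proof (rule sum.cong[OF refl])
    fix e assume "e \<in> E"
    with sE obtain x y where xy: "x \<noteq> y" "e = {x,y}" "x \<in> V" "y \<in> V" by blast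
    show "card (e \<inter> V1) = (if \<not> (e \<subseteq> V1 \<or> e \<subseteq> V2) then 1 else 0) + 2 * (if e \<subseteq> V1 then 1 else 0)"
      using edge_card[of x y V1 V2] xy V12 V1V2 by simp
  qed
  also have "\<dots> = (\<Sum>e\<in>E. (if \<not> (e \<subseteq> V1 \<or> e \<subseteq> V2) then 1 else 0)) + 2 * (\<Sum>e\<in>E. (if e \<subseteq> V1 then 1 else 0))"
    by (simp add: sum.distrib sum_distrib_left)
  also have "(\<Sum>e\<in>E. (if \<not> (e \<subseteq> V1 \<or> e \<subseteq> V2) then 1 else 0)) = card X"
  proof -
    have "(\<Sum>e\<in>E. (if \<not> (e \<subseteq> V1 \<or> e \<subseteq> V2) then 1 else 0)) = (\<Sum>e\<in>X. 1::nat)"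
      unfolding XE using finE by (rule sum.inter_filter[symmetric])
    then show ?thesis by simp
  qed
  finally have "odd (card X)" using assms(3) by simp
  then have oddS: "odd (card S)" using TSX cardT assms(5) by simp
  \<comment> \<open>compatible cycles correspond to S\<close>
  have form: "\<exists>e. C \<inter> T = {e} \<and> e \<in> S \<and> C = insert e (K F e)"
    if comp: "compatible_cycle E T V1 V2 C" for C
  proof -
    from comp have cyc: "is_cycle E C" and sub: "\<Union>C \<subseteq> V1 \<or> \<Union>C \<subseteq> V2" and c1: "card (C \<inter> T) = 1"
      by (simp_all add: compatible_cycle_def)
    from c1 obtain e where CT: "C \<inter> T = {e}" by (rule card_1_singletonE)
    from cyc obtain vs where D: "distinct vs" and L: "length vs \<ge> 3" and Ceq: "C = cycle_edges vs"
      and CE: "C \<subseteq> E" unfolding is_cycle_def by blast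
    have eC: "e \<in> C" and eT: "e \<in> T" using CT by auto
    have "e \<subseteq> \<Union>C" using eC by auto
    then have "e \<subseteq> V1 \<or> e \<subseteq> V2" using sub by auto
    then have eS: "e \<in> S" using eT by (simp add: S_def)
    have eF: "e \<notin> F" using eT TF by auto
    have CF: "C - {e} \<subseteq> F"
    proof
      fix c assume c: "c \<in> C - {e}"
      then have "c \<in> T \<union> F" using CE TFE by auto
      moreover have "c \<notin> T" using c CT by auto
      ultimately show "c \<in> F" by simp
    qed
    have "C = insert e (K F e)" by (rule cycle_char[OF acF sF D L Ceq eC eF CF])
    then show ?thesis using CT eS by blast
  qed
  have exist: "\<exists>C. compatible_cycle E T V1 V2 C \<and> C \<inter> T = {e}" if eS: "e \<in> S" for e
  proof -
    have eT: "e \<in> T" and eV: "e \<subseteq> V1 \<or> e \<subseteq> V2" using eS by (simp_all add: S_def)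
    then have "e \<in> E" using TE by auto
    with sE obtain a b where ab: "a \<noteq> b" "e = {a,b}" by blast
    from eV show ?thesis
    proof
      assume eW: "e \<subseteq> V1"
      have FW: "\<forall>f\<in>F. f \<subseteq> V1 \<or> f \<inter> V1 = {}" using Fin V1V2 by auto
      from exist_cyc[OF eT eW TE FE TF c1 FW ab(2) ab(1)] obtain C where
        "is_cycle E C" "\<Union>C \<subseteq> V1" "C \<inter> T = {e}" by blast
      then show ?thesis by (intro exI[of _ C]) (simp add: compatible_cycle_def)
    next
      assume eW: "e \<subseteq> V2"
      have FW: "\<forall>f\<in>F. f \<subseteq> V2 \<or> f \<inter> V2 = {}" using Fin V1V2 by auto
      from exist_cyc[OF eT eW TE FE TF c2 FW ab(2) ab(1)] obtain C where
        "is_cycle E C" "\<Union>C \<subseteq> V2" "C \<inter> T = {e}" by blast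
      then show ?thesis by (intro exI[of _ C]) (simp add: compatible_cycle_def)
    qed
  qed
  have seteq: "{C. compatible_cycle E T V1 V2 C} = (\<lambda>e. insert e (K F e)) ` S"
  proof
    show "{C. compatible_cycle E T V1 V2 C} \<subseteq> (\<lambda>e. insert e (K F e)) ` S"
    proof
      fix C assume "C \<in> {C. compatible_cycle E T V1 V2 C}"
      then obtain e where "e \<in> S" "C = insert e (K F e)" using form by blast
      then show "C \<in> (\<lambda>e. insert e (K F e)) ` S" by (rule rev_image_eqI)
    qed
    show "(\<lambda>e. insert e (K F e)) ` S \<subseteq> {C. compatible_cycle E T V1 V2 C}"
    proof
      fix D assume "D \<in> (\<lambda>e. insert e (K F e)) ` S"
      then obtain e where eS: "e \<in> S" and D: "D = insert e (K F e)" by blast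
      from exist[OF eS] obtain C where C: "compatible_cycle E T V1 V2 C" "C \<inter> T = {e}" by blast
      from form[OF C(1)] obtain e' where e': "C \<inter> T = {e'}" "C = insert e' (K F e')" by blast
      have "e' = e" using e'(1) C(2) by simp
      then have "D = C" using D e'(2) by simp
      then show "D \<in> {C. compatible_cycle E T V1 V2 C}" using C(1) by simp
    qed
  qed
  have inj: "inj_on (\<lambda>e. insert e (K F e)) S"
  proof (rule inj_onI)
    fix e1 e2 assume e1: "e1 \<in> S" and e2: "e2 \<in> S" and eq: "insert e1 (K F e1) = insert e2 (K F e2)"
    have "insert e (K F e) \<inter> T = {e}" if "e \<in> S" for e
    proof -
      have "K F e \<subseteq> F" by (auto simp: K_def)
      then have "K F e \<inter> T = {}" using TF by auto
      moreover have "e \<in> T" using that by (simp add: S_def)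
      ultimately show ?thesis by auto
    qed
    then have "{e1} = {e2}" using e1 e2 eq by metis
    then show "e1 = e2" by simp
  qed
  have "card {C. compatible_cycle E T V1 V2 C} = card S"
    unfolding seteq using inj by (rule card_image)
  then show ?thesis using oddS by simp
qed

end
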